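(* Let $\mathsf{K}$ be a variety, $\mathbf{B}\in\mathsf{K}$, and $\mathbf{A}\leq\mathbf{B}$ fully epic in $\mathsf{K}$. Then $\theta=\mathrm{Cg}^{\mathbf{B}}(\theta{\upharpoonright}_A)$ for every congruence $\theta$ of $\mathbf{B}$.
   Context: $\mathrm{Cg}^{\mathbf{B}}(X)$ is the least congruence of $\mathbf{B}$ containing $X\subseteq B\times B$; $\theta{\upharpoonright}_A=\theta\cap(A\times A)$. $\mathbf{A}\leq\mathbf{B}$ is epic in $\mathsf{K}$ if for all $\mathbf{C}\in\mathsf{K}$ and homomorphisms $g,h\colon\mathbf{B}\to\mathbf{C}$, $g{\upharpoonright}_A=h{\upharpoonright}_A$ implies $g=h$; it is full in $\mathsf{K}$ if it is proper, almost total ($B=\mathrm{Sg}^{\mathbf{B}}(A\cup\{b\})$ for some $b$), and every congruence $\theta\neq\mathrm{id}_B$ of $\mathbf{B}$ relates each $b\in B$ to some $a\in A$; fully epic means full and epic. *)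

theory Defs
  imports Main
begin

record ('f, 'a) ualg =
  ucarrier :: "'a set"
  uops :: "'f \<Rightarrow> 'a list \<Rightarrow> 'a"

definition is_alg :: "('f \<Rightarrow> nat) \<Rightarrow> ('f, 'a) ualg \<Rightarrow> bool" where
  "is_alg ar B \<longleftrightarrow> ucarrier B \<noteq> {} \<and>
     (\<forall>f xs. length xs = ar f \<and> set xs \<subseteq> ucarrier B \<longrightarrow> uops B f xs \<in> ucarrier B)"

datatype 'f trm = Var nat | App 'f "'f trm list"

fun wf_trm :: "('f \<Rightarrow> nat) \<Rightarrow> 'f trm \<Rightarrow> bool" where
  "wf_trm ar (Var n) = True"
| "wf_trm ar (App f ts) = (length ts = ar f \<and> list_all (wf_trm ar) ts)"

fun eval :: "('f, 'a) ualg \<Rightarrow> (nat \<Rightarrow> 'a) \<Rightarrow> 'f trm \<Rightarrow> 'a" where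
  "eval B \<sigma> (Var n) = \<sigma> n"
| "eval B \<sigma> (App f ts) = uops B f (map (eval B \<sigma>) ts)"

text \<open>A variety is presented (Birkhoff) as the class of models of a set E of identities
  between well-formed terms; membership of an algebra (of any carrier type) in it:\<close>

definition wf_eqs :: "('f \<Rightarrow> nat) \<Rightarrow> ('f trm \<times> 'f trm) set \<Rightarrow> bool" where
  "wf_eqs ar E \<longleftrightarrow> (\<forall>(s, t) \<in> E. wf_trm ar s \<and> wf_trm ar t)"

definition in_variety :: "('f \<Rightarrow> nat) \<Rightarrow> ('f trm \<times> 'f trm) set \<Rightarrow> ('f, 'a) ualg \<Rightarrow> bool" where
  "in_variety ar E C \<longleftrightarrow> is_alg ar C \<and>
     (\<forall>(s, t) \<in> E. \<forall>\<sigma>. (\<forall>n. \<sigma> n \<in> ucarrier C) \<longrightarrow> eval C \<sigma> s = eval C \<sigma> t)"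

definition subalg :: "('f \<Rightarrow> nat) \<Rightarrow> ('f, 'a) ualg \<Rightarrow> ('f, 'a) ualg \<Rightarrow> bool" where
  "subalg ar A B \<longleftrightarrow> is_alg ar A \<and> is_alg ar B \<and> ucarrier A \<subseteq> ucarrier B \<and>
     (\<forall>f xs. length xs = ar f \<and> set xs \<subseteq> ucarrier A \<longrightarrow> uops A f xs = uops B f xs)"

definition hom :: "('f \<Rightarrow> nat) \<Rightarrow> ('f, 'a) ualg \<Rightarrow> ('f, 'c) ualg \<Rightarrow> ('a \<Rightarrow> 'c) \<Rightarrow> bool" where
  "hom ar B C h \<longleftrightarrow> h ` ucarrier B \<subseteq> ucarrier C \<and>
     (\<forall>f xs. length xs = ar f \<and> set xs \<subseteq> ucarrier B \<longrightarrow> h (uops B f xs) = uops C f (map h xs))"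

definition is_con :: "('f \<Rightarrow> nat) \<Rightarrow> ('f, 'a) ualg \<Rightarrow> ('a \<times> 'a) set \<Rightarrow> bool" where
  "is_con ar B \<theta> \<longleftrightarrow> equiv (ucarrier B) \<theta> \<and>
     (\<forall>f xs ys. length xs = ar f \<and> length ys = ar f \<and> list_all2 (\<lambda>x y. (x, y) \<in> \<theta>) xs ys
        \<longrightarrow> (uops B f xs, uops B f ys) \<in> \<theta>)"

definition Cg :: "('f \<Rightarrow> nat) \<Rightarrow> ('f, 'a) ualg \<Rightarrow> ('a \<times> 'a) set \<Rightarrow> ('a \<times> 'a) set" where
  "Cg ar B X = \<Inter> {\<theta>. is_con ar B \<theta> \<and> X \<subseteq> \<theta>}"

definition Sg :: "('f \<Rightarrow> nat) \<Rightarrow> ('f, 'a) ualg \<Rightarrow> 'a set \<Rightarrow> 'a set" where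
  "Sg ar B X = \<Inter> {S. S \<subseteq> ucarrier B \<and> X \<subseteq> S \<and>
      (\<forall>f xs. length xs = ar f \<and> set xs \<subseteq> S \<longrightarrow> uops B f xs \<in> S)}"

definition restr :: "('a \<times> 'a) set \<Rightarrow> 'a set \<Rightarrow> ('a \<times> 'a) set" where
  "restr \<theta> A = \<theta> \<inter> (A \<times> A)"

text \<open>Epic / full subalgebras. Epicness quantifies over all algebras C of the variety;
  in HOL the carrier type of C must be fixed, so it is a parameter (given via an itself argument).\<close>

definition epic_in :: "('f \<Rightarrow> nat) \<Rightarrow> ('f trm \<times> 'f trm) set \<Rightarrow> 'c itself
                        \<Rightarrow> ('f, 'a) ualg \<Rightarrow> ('f, 'a) ualg \<Rightarrow> bool" where
  "epic_in ar E (T :: 'c itself) A B \<longleftrightarrow> subalg ar A B \<and>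
     (\<forall>(C :: ('f, 'c) ualg) g h. in_variety ar E C \<longrightarrow> hom ar B C g \<longrightarrow> hom ar B C h \<longrightarrow>
        (\<forall>a \<in> ucarrier A. g a = h a) \<longrightarrow> (\<forall>b \<in> ucarrier B. g b = h b))"

definition almost_total :: "('f \<Rightarrow> nat) \<Rightarrow> ('f, 'a) ualg \<Rightarrow> ('f, 'a) ualg \<Rightarrow> bool" where
  "almost_total ar A B \<longleftrightarrow> (\<exists>b \<in> ucarrier B. ucarrier B = Sg ar B (ucarrier A \<union> {b}))"

definition full_in :: "('f \<Rightarrow> nat) \<Rightarrow> ('f, 'a) ualg \<Rightarrow> ('f, 'a) ualg \<Rightarrow> bool" where
  "full_in ar A B \<longleftrightarrow> subalg ar A B \<and> ucarrier A \<noteq> ucarrier B \<and> almost_total ar A B \<and>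
     (\<forall>\<theta>. is_con ar B \<theta> \<and> \<theta> \<noteq> Id_on (ucarrier B) \<longrightarrow>
        (\<forall>b \<in> ucarrier B. \<exists>a \<in> ucarrier A. (b, a) \<in> \<theta>))"

end

theory Submission
  imports Defs
begin

lemma full_con: "is_alg ar B \<Longrightarrow> is_con ar B (ucarrier B \<times> ucarrier B)"
  unfolding is_con_def is_alg_def
proof (intro conjI allI impI)
  assume "ucarrier B \<noteq> {} \<and> (\<forall>f xs. length xs = ar f \<and> set xs \<subseteq> ucarrier B \<longrightarrow> uops B f xs \<in> ucarrier B)"
  then have cl: "\<And>f xs. length xs = ar f \<Longrightarrow> set xs \<subseteq> ucarrier B \<Longrightarrow> uops B f xs \<in> ucarrier B" by blast
  show "equiv (ucarrier B) (ucarrier B \<times> ucarrier B)"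
    by (auto simp: equiv_def refl_on_def sym_def trans_def)
  fix f xs ys
  assume a: "length xs = ar f \<and> length ys = ar f \<and> list_all2 (\<lambda>x y. (x, y) \<in> ucarrier B \<times> ucarrier B) xs ys"
  have "set xs \<subseteq> ucarrier B" "set ys \<subseteq> ucarrier B"
    using a by (auto simp: list_all2_conv_all_nth in_set_conv_nth)
  then show "(uops B f xs, uops B f ys) \<in> ucarrier B \<times> ucarrier B" using cl a by auto
qed

lemma Cg_con:
  assumes "is_alg ar B" "X \<subseteq> ucarrier B \<times> ucarrier B"
  shows "is_con ar B (Cg ar B X)"
proof -
  let ?F = "{\<theta>. is_con ar B \<theta> \<and> X \<subseteq> \<theta>}"
  have ne: "ucarrier B \<times> ucarrier B \<in> ?F" using full_con[OF assms(1)] assms(2) by auto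
  have eq: "\<And>\<theta>. \<theta> \<in> ?F \<Longrightarrow> equiv (ucarrier B) \<theta>" by (auto simp: is_con_def)
  have "equiv (ucarrier B) (\<Inter>?F)"
    unfolding equiv_def refl_on_def sym_def trans_def
  proof (intro conjI allI impI ballI)
    show "\<Inter>?F \<subseteq> ucarrier B \<times> ucarrier B" using ne by blast
    fix x assume "x \<in> ucarrier B"
    then show "(x,x) \<in> \<Inter>?F" using eq by (auto simp: equiv_def refl_on_def)
  next
    fix x y assume "(x,y) \<in> \<Inter>?F"
    then show "(y,x) \<in> \<Inter>?F" using eq by (auto simp: equiv_def sym_def)
  next
    fix x y z assume "(x,y) \<in> \<Inter>?F" "(y,z) \<in> \<Inter>?F"
    then show "(x,z) \<in> \<Inter>?F" using eq unfolding equiv_def trans_def by blast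
  qed
  moreover have "\<forall>f xs ys. length xs = ar f \<and> length ys = ar f \<and> list_all2 (\<lambda>x y. (x, y) \<in> \<Inter>?F) xs ys
        \<longrightarrow> (uops B f xs, uops B f ys) \<in> \<Inter>?F"
  proof (intro allI impI)
    fix f xs ys assume a: "length xs = ar f \<and> length ys = ar f \<and> list_all2 (\<lambda>x y. (x, y) \<in> \<Inter>?F) xs ys"
    show "(uops B f xs, uops B f ys) \<in> \<Inter>?F"
    proof
      fix \<theta> assume t: "\<theta> \<in> ?F"
      have "list_all2 (\<lambda>x y. (x, y) \<in> \<theta>) xs ys"
        using a t by (auto elim!: list_all2_mono)
      then show "(uops B f xs, uops B f ys) \<in> \<theta>" using t a by (auto simp: is_con_def)
    qed
  qed
  ultimately show ?thesis unfolding is_con_def Cg_def by blast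
qed

definition sing_alg :: "('f, 'b) ualg \<Rightarrow> ('f, 'b set) ualg" where
  "sing_alg B = \<lparr>ucarrier = (\<lambda>x. {x}) ` ucarrier B, uops = (\<lambda>f xs. {uops B f (map the_elem xs)})\<rparr>"

lemma eval_sing:
  assumes "\<forall>n. \<sigma> n \<in> ucarrier (sing_alg B)"
  shows "eval (sing_alg B) \<sigma> t = {eval B (the_elem \<circ> \<sigma>) t}"
proof (induction t)
  case (Var n)
  from assms obtain x where "\<sigma> n = {x}" by (auto simp: sing_alg_def)
  then show ?case by simp
next
  case (App f ts)
  have "map (the_elem \<circ> eval (sing_alg B) \<sigma>) ts = map (eval B (the_elem \<circ> \<sigma>)) ts"
    using App by (auto simp: comp_def)
  have "eval (sing_alg B) \<sigma> (App f ts) = {uops B f (map (the_elem \<circ> eval (sing_alg B) \<sigma>) ts)}"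
    by (simp add: sing_alg_def)
  then show ?case using \<open>map _ ts = _\<close> by (metis eval.simps(2))
qed

lemma sing_variety:
  assumes "in_variety ar E B"
  shows "in_variety ar E (sing_alg B)"
proof -
  have alg: "is_alg ar B" using assms by (simp add: in_variety_def)
  have "is_alg ar (sing_alg B)"
    unfolding is_alg_def
  proof (intro conjI allI impI)
    show "ucarrier (sing_alg B) \<noteq> {}" using alg by (simp add: sing_alg_def is_alg_def)
    fix f xs assume a: "length xs = ar f \<and> set xs \<subseteq> ucarrier (sing_alg B)"
    then have "set (map the_elem xs) \<subseteq> ucarrier B" by (auto simp: sing_alg_def)
    then show "uops (sing_alg B) f xs \<in> ucarrier (sing_alg B)"
      using alg a by (auto simp: is_alg_def sing_alg_def)
  qed
  moreover have "\<forall>(s, t) \<in> E. \<forall>\<sigma>. (\<forall>n. \<sigma> n \<in> ucarrier (sing_alg B)) \<longrightarrow>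
      eval (sing_alg B) \<sigma> s = eval (sing_alg B) \<sigma> t"
  proof (intro ballI allI impI, clarify)
    fix s t and \<sigma> :: "nat \<Rightarrow> 'b set" assume st: "(s,t) \<in> E" and s: "\<forall>n. \<sigma> n \<in> ucarrier (sing_alg B)"
    have "\<forall>n. (the_elem \<circ> \<sigma>) n \<in> ucarrier B"
    proof
      fix n :: nat from s obtain x where "x \<in> ucarrier B" "\<sigma> n = {x}" by (auto simp: sing_alg_def)
      then show "(the_elem \<circ> \<sigma>) n \<in> ucarrier B" by simp
    qed
    then have "eval B (the_elem \<circ> \<sigma>) s = eval B (the_elem \<circ> \<sigma>) t"
      using assms st by (auto simp: in_variety_def)
    then show "eval (sing_alg B) \<sigma> s = eval (sing_alg B) \<sigma> t"
      using eval_sing[OF s] by simp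
  qed
  ultimately show ?thesis by (simp add: in_variety_def)
qed

theorem mainTheorem13:
  fixes ar :: "'f \<Rightarrow> nat"
    and E :: "('f trm \<times> 'f trm) set"
    and A B :: "('f, 'b) ualg"
  assumes "wf_eqs ar E"
    and "in_variety ar E B"
    and "full_in ar A B"
    and "epic_in ar E TYPE('b set) A B"
  shows "\<forall>\<theta>. is_con ar B \<theta> \<longrightarrow> \<theta> = Cg ar B (restr \<theta> (ucarrier A))"
proof (intro allI impI)
  fix \<theta> assume con: "is_con ar B \<theta>"
  have alg: "is_alg ar B" using assms(2) by (simp add: in_variety_def)
  have sub: "subalg ar A B" using assms(3) by (simp add: full_in_def)
  have AB: "ucarrier A \<subseteq> ucarrier B" using sub by (simp add: subalg_def)
  have eqt: "equiv (ucarrier B) \<theta>" using con by (simp add: is_con_def)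
  have tB: "\<theta> \<subseteq> ucarrier B \<times> ucarrier B" using eqt by (simp add: equiv_def refl_on_def)
  define \<phi> where "\<phi> = Cg ar B (restr \<theta> (ucarrier A))"
  have rB: "restr \<theta> (ucarrier A) \<subseteq> ucarrier B \<times> ucarrier B" using tB by (auto simp: restr_def)
  have pcon: "is_con ar B \<phi>" unfolding \<phi>_def by (rule Cg_con[OF alg rB])
  have eqp: "equiv (ucarrier B) \<phi>" using pcon by (simp add: is_con_def)
  have rp: "restr \<theta> (ucarrier A) \<subseteq> \<phi>" unfolding \<phi>_def Cg_def by blast
  have pt: "\<phi> \<subseteq> \<theta>" unfolding \<phi>_def Cg_def using con by (auto simp: restr_def)
  have full: "\<And>\<psi>. is_con ar B \<psi> \<Longrightarrow> \<psi> \<noteq> Id_on (ucarrier B) \<Longrightarrow>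
        (\<forall>b \<in> ucarrier B. \<exists>a \<in> ucarrier A. (b, a) \<in> \<psi>)"
    using assms(3) by (simp add: full_in_def)
  show "\<theta> = \<phi>"
  proof (cases "\<phi> = Id_on (ucarrier B)")
    case False
    have fp: "\<forall>b \<in> ucarrier B. \<exists>a \<in> ucarrier A. (b, a) \<in> \<phi>" using full[OF pcon False] .
    have "\<theta> \<subseteq> \<phi>"
    proof
      fix p assume "p \<in> \<theta>"
      then obtain x y where p: "p = (x,y)" "(x,y) \<in> \<theta>" by (cases p) auto
      then have xy: "x \<in> ucarrier B" "y \<in> ucarrier B" using tB by auto
      obtain a where a: "a \<in> ucarrier A" "(x,a) \<in> \<phi>" using fp xy by blast
      obtain a' where a': "a' \<in> ucarrier A" "(y,a') \<in> \<phi>" using fp xy by blast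
      have "(a,x) \<in> \<theta>" "(a',y) \<in> \<theta>" using a a' pt eqt by (auto simp: equiv_def sym_def)
      then have "(a,a') \<in> \<theta>" using p(2) eqt a'(2) pt unfolding equiv_def trans_def sym_def by blast
      then have "(a,a') \<in> \<phi>" using rp a a' by (auto simp: restr_def)
      then have "(x,a') \<in> \<phi>" using a eqp unfolding equiv_def trans_def by blast
      moreover have "(a',y) \<in> \<phi>" using a' eqp unfolding equiv_def sym_def by blast
      ultimately show "p \<in> \<phi>" using p eqp unfolding equiv_def trans_def by blast
    qed
    then show ?thesis using pt by blast
  next
    case True
    have "\<theta> = Id_on (ucarrier B)"
    proof (rule ccontr)
      assume ne: "\<theta> \<noteq> Id_on (ucarrier B)"
      have ft: "\<forall>b \<in> ucarrier B. \<exists>a \<in> ucarrier A. (b, a) \<in> \<theta>" using full[OF con ne] .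
      have uniq: "\<And>a a'. a \<in> ucarrier A \<Longrightarrow> a' \<in> ucarrier A \<Longrightarrow> (a,a') \<in> \<theta> \<Longrightarrow> a = a'"
        using rp True by (auto simp: restr_def)
      define r where "r b = (SOME a. a \<in> ucarrier A \<and> (b,a) \<in> \<theta>)" for b
      have r: "\<And>b. b \<in> ucarrier B \<Longrightarrow> r b \<in> ucarrier A \<and> (b, r b) \<in> \<theta>"
        unfolding r_def using ft by (metis (no_types, lifting) someI_ex)
      have runiq: "\<And>b a. b \<in> ucarrier B \<Longrightarrow> a \<in> ucarrier A \<Longrightarrow> (b,a) \<in> \<theta> \<Longrightarrow> r b = a"
      proof -
        fix b a assume b: "b \<in> ucarrier B" "a \<in> ucarrier A" "(b,a) \<in> \<theta>"
        have "(r b, a) \<in> \<theta>" using r[OF b(1)] b eqt unfolding equiv_def sym_def trans_def by blast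
        then show "r b = a" using uniq r[OF b(1)] b by blast
      qed
      let ?C = "sing_alg B"
      have vC: "in_variety ar E ?C" using sing_variety[OF assms(2)] .
      have hg: "hom ar B ?C (\<lambda>b. {r b})"
        unfolding hom_def
      proof (intro conjI allI impI)
        show "(\<lambda>b. {r b}) ` ucarrier B \<subseteq> ucarrier ?C"
          using r AB by (auto simp: sing_alg_def)
        fix f xs assume a: "length xs = ar f \<and> set xs \<subseteq> ucarrier B"
        have rxs: "set (map r xs) \<subseteq> ucarrier A" using a r by auto
        have opA: "uops A f (map r xs) \<in> ucarrier A" using sub rxs a by (auto simp: subalg_def is_alg_def)
        have opeq: "uops A f (map r xs) = uops B f (map r xs)" using sub rxs a by (auto simp: subalg_def)
        have "list_all2 (\<lambda>x y. (x, y) \<in> \<theta>) xs (map r xs)"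
          using a r by (auto simp: list_all2_conv_all_nth subset_code(1))
        then have "(uops B f xs, uops B f (map r xs)) \<in> \<theta>" using con a by (auto simp: is_con_def)
        moreover have "uops B f xs \<in> ucarrier B" using alg a by (auto simp: is_alg_def)
        ultimately have "r (uops B f xs) = uops B f (map r xs)" using runiq opA opeq by metis
        then show "{r (uops B f xs)} = uops ?C f (map (\<lambda>b. {r b}) xs)"
          by (simp add: sing_alg_def comp_def)
      qed
      have hh: "hom ar B ?C (\<lambda>b. {b})"
        unfolding hom_def by (auto simp: sing_alg_def comp_def)
      have "\<forall>a \<in> ucarrier A. {r a} = {a}" using runiq AB eqt by (auto simp: equiv_def refl_on_def)
      then have "\<forall>b \<in> ucarrier B. {r b} = {b}"
        using assms(4) vC hg hh unfolding epic_in_def by blast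
      then have "ucarrier B \<subseteq> ucarrier A" using r by force
      then show False using AB assms(3) by (auto simp: full_in_def)
    qed
    then show ?thesis using True by simp
  qed
qed

end
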